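(* For all $x$ with $|x|<1/4$, \[ \sum_{n=0}^\infty\binom{4n}{2n}O_{2n}x^{2n}=-\frac{\sqrt{1+4x}\,\ln(1-4x)+\sqrt{1-4x}\,\ln(1+4x)}{4\sqrt{1-16x^2}} \] and \[ \sum_{n=0}^\infty\binom{4n+2}{2n+1}O_{2n+1}x^{2n+1}=-\frac{\sqrt{1+4x}\,\ln(1-4x)-\sqrt{1-4x}\,\ln(1+4x)}{4\sqrt{1-16x^2}}. \]
   Context: $O_n=\sum_{j=1}^n\frac1{2j-1}$ is the $n$th odd harmonic number ($O_0=0$). *)

theory Defs
  imports Complex_Main
begin

definition odd_harmonic :: "nat \<Rightarrow> real" where
  "odd_harmonic n = (\<Sum>j=1..n. 1 / (2 * real j - 1))"

end

theory Submission imports Defs "HOL-Computational_Algebra.Formal_Power_Series" "HOL-Analysis.Analysis" begin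

definition cb :: "nat \<Rightarrow> real" where "cb n = real ((2*n) choose n)"
definition ll :: "nat \<Rightarrow> real" where "ll n = 4^n / (2 * real n)"

lemma cb_rec: "real (Suc n) * cb (Suc n) = (4*real n+2) * cb n"
proof -
  have 1: "Suc n * ((2*Suc n) choose Suc n) = (2*n+2) * ((2*n+1) choose n)"
    using Suc_times_binomial[of n "2*n+1"] by simp
  have 2: "Suc n * ((2*n+1) choose Suc n) = (2*n+1) * ((2*n) choose n)"
    using Suc_times_binomial[of n "2*n"] by simp
  have 3: "(2*n+1) choose n = (2*n+1) choose Suc n"
    using binomial_symmetric[of n "2*n+1"] by (simp add: numeral_2_eq_2)
  define A where "A = real ((2*Suc n) choose Suc n)"
  define D where "D = real ((2*n+1) choose Suc n)"
  define E where "E = real ((2*n) choose n)"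
  have h1: "real (Suc n) * A = real (2*n+2) * D"
    unfolding A_def D_def of_nat_mult[symmetric] 1[unfolded 3] by (rule refl)
  have h2: "real (Suc n) * D = real (2*n+1) * E"
    unfolding E_def D_def of_nat_mult[symmetric] 2 by (rule refl)
  have "real (Suc n) * (real (Suc n) * A) = real (2*n+2) * (real (2*n+1) * E)"
    using h1 h2 by (metis mult.left_commute)
  also have "\<dots> = real (Suc n) * ((4*real n+2) * E)" by (simp add: algebra_simps)
  finally have "real (Suc n) * A = (4*real n+2) * E"
    by (subst (asm) mult_left_cancel) auto
  thus ?thesis unfolding cb_def A_def E_def .
qed

lemma gb: "((-1/2::real) gchoose n) * (-4)^n = cb n"
proof (induction n)
  case 0 then show ?case by (simp add: cb_def)
next
  case (Suc k)
  have m: "(-1/2::real) * ((-1/2) gchoose k) = real k * ((-1/2) gchoose k) + real (Suc k) * ((-1/2) gchoose (Suc k))"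
    by (rule gbinomial_mult_1)
  have m2: "real (Suc k) * ((-1/2::real) gchoose Suc k) = (-1/2 - real k) * ((-1/2) gchoose k)"
    using m by (simp add: algebra_simps)
  have "real (Suc k) * (((-1/2::real) gchoose Suc k) * (-4)^Suc k) = (real (Suc k) * ((-1/2::real) gchoose Suc k)) * (-4)^Suc k"
    by simp
  also have "\<dots> = (4*real k+2) * (((-1/2) gchoose k) * (-4)^k)"
    unfolding m2 by (simp add: algebra_simps)
  also have "\<dots> = real (Suc k) * cb (Suc k)" using Suc cb_rec by simp
  finally have "real (Suc k) * (((-1/2::real) gchoose Suc k) * (-4)^Suc k) = real (Suc k) * cb (Suc k)" .
  thus ?case by (subst (asm) mult_left_cancel) auto
qed

lemma oh_Suc: "odd_harmonic (Suc n) = odd_harmonic n + 1 / (2 * real n + 1)"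
  unfolding odd_harmonic_def by (simp add: algebra_simps)

lemma coeff_eq: "(\<Sum>i=0..n. ll i * cb (n - i)) = cb n * odd_harmonic n"
proof -
  define L where "L = Abs_fps ll"
  define B where "B = Abs_fps cb"
  have hL: "fps_deriv L = fps_const 2 + fps_const 4 * (fps_X * fps_deriv L)"
  proof (rule fps_ext)
    fix n show "fps_nth (fps_deriv L) n = fps_nth (fps_const 2 + fps_const 4 * (fps_X * fps_deriv L)) n"
      by (cases n) (simp_all add: L_def ll_def fps_numeral_nth field_simps)
  qed
  have hB: "fps_deriv B = fps_const 2 * B + fps_const 4 * (fps_X * fps_deriv B)"
  proof (rule fps_ext)
    fix n show "fps_nth (fps_deriv B) n = fps_nth (fps_const 2 * B + fps_const 4 * (fps_X * fps_deriv B)) n"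
      using cb_rec[of n] by (cases n) (simp_all add: B_def fps_numeral_nth algebra_simps)
  qed
  have e: "fps_deriv L * B + L * fps_deriv B = (fps_const 2 + fps_const 4 * (fps_X * fps_deriv L)) * B + L * (fps_const 2 * B + fps_const 4 * (fps_X * fps_deriv B))"
    by (simp only: hL[symmetric] hB[symmetric])
  have hC: "fps_deriv (L*B) = fps_const 2 * B + fps_const 2 * (L*B) + fps_const 4 * (fps_X * fps_deriv (L*B))"
  proof -
    have d: "fps_deriv (L*B) = fps_deriv L * B + L * fps_deriv B"
      by (simp add: add.commute)
    have "fps_deriv (L*B) = (fps_const 2 + fps_const 4 * (fps_X * fps_deriv L)) * B + L * (fps_const 2 * B + fps_const 4 * (fps_X * fps_deriv B))"
      using d e by simp
    also have "\<dots> = fps_const 2 * B + fps_const 2 * (L*B) + fps_const 4 * (fps_X * (fps_deriv L * B + L * fps_deriv B))"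
      by (simp add: algebra_simps)
    also have "\<dots> = fps_const 2 * B + fps_const 2 * (L*B) + fps_const 4 * (fps_X * fps_deriv (L*B))"
      by (simp only: d[symmetric])
    finally show ?thesis .
  qed
  have hBn: "fps_nth B k = cb k" for k by (simp add: B_def)
  define c where "c n = fps_nth (L*B) n" for n
  have cn: "c n = (\<Sum>i=0..n. ll i * cb (n - i))" for n
    by (simp add: c_def fps_mult_nth L_def B_def)
  have crec: "real (Suc n) * c (Suc n) = (4*real n+2) * c n + 2 * cb n" for n
  proof -
    have "fps_nth (fps_deriv (L*B)) n = fps_nth (fps_const 2 * B + fps_const 2 * (L*B) + fps_const 4 * (fps_X * fps_deriv (L*B))) n"
      by (simp only: hC[symmetric])
    hence "real (Suc n) * c (Suc n) = 2 * cb n + 2 * c n + 4 * (real n * c n)"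
      by (cases n) (simp_all add: c_def B_def[symmetric] hBn del: fps_deriv_mult)
    thus ?thesis by (simp add: algebra_simps)
  qed
  have "c n = cb n * odd_harmonic n"
  proof (induction n)
    case 0 then show ?case by (simp add: cn ll_def odd_harmonic_def)
  next
    case (Suc n)
    have "real (Suc n) * c (Suc n) = real (Suc n) * (cb (Suc n) * odd_harmonic (Suc n))"
      using crec[of n] Suc cb_rec[of n] unfolding oh_Suc
      by (simp add: field_simps)
    thus ?case by (subst (asm) mult_left_cancel) auto
  qed
  thus ?thesis using cn by simp
qed

lemma LS: assumes "\<bar>x::real\<bar> < 1/4" shows "(\<lambda>n. ll n * x^n) sums (- ln (1 - 4*x) / 2)"
proof -
  have "\<bar>-4*x\<bar> < 1" using assms by simp
  from ln_series'[OF this] have "(\<lambda>n. - ((4*x)^n) / of_nat n) sums ln (1 - 4*x)" by simp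
  hence "(\<lambda>n. (- ((4*x)^n) / of_nat n) * (-1/2)) sums (ln (1 - 4*x) * (-1/2))" by (rule sums_mult2)
  moreover have "(\<lambda>n. (- ((4*x)^n) / of_nat n) * (-1/2)) = (\<lambda>n. ll n * x^n)"
    by (auto simp: ll_def power_mult_distrib)
  ultimately show ?thesis by simp
qed

lemma BS: assumes "\<bar>x::real\<bar> < 1/4" shows "(\<lambda>n. cb n * x^n) sums (1 / sqrt (1 - 4*x))"
proof -
  have "\<bar>-4*x\<bar> < 1" using assms by simp
  from gen_binomial_real[OF this, of "-1/2"]
  have "(\<lambda>n. ((-1/2) gchoose n) * (-4*x)^n) sums (1 + -4*x) powr (-1/2)" .
  moreover have "(\<lambda>n. ((-1/2) gchoose n) * (-4*x)^n) = (\<lambda>n. cb n * x^n)"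
  proof -
    have p: "(-4*x)^n = (-4)^n * x^n" for n by (rule power_mult_distrib)
    show ?thesis by (simp only: p gb[symmetric] mult.assoc)
  qed
  moreover have "(1 + -4*x) powr (-1/2) = 1 / sqrt (1 - 4*x)"
  proof -
    have "(1 + -4*x) powr (-1/2) = (1 - 4*x) powr (-(1/2))" by simp
    also have "\<dots> = 1 / (1 - 4*x) powr (1/2)" by (rule powr_minus_divide)
    also have "\<dots> = 1 / sqrt (1 - 4*x)" using assms by (simp add: powr_half_sqrt)
    finally show ?thesis .
  qed
  ultimately show ?thesis by simp
qed

lemma cb_nonneg: "cb n \<ge> 0" by (simp add: cb_def)
lemma ll_nonneg: "ll n \<ge> 0" by (simp add: ll_def)

lemma AS: assumes "\<bar>x::real\<bar> < 1/4"
  shows "(\<lambda>n. cb n * odd_harmonic n * x^n) sums (- ln (1 - 4*x) / (2 * sqrt (1 - 4*x)))"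
proof -
  have ax: "\<bar>\<bar>x\<bar>\<bar> < 1/4" using assms by simp
  have s1: "summable (\<lambda>k. norm (ll k * x^k))"
    using sums_summable[OF LS[OF ax]] by (simp add: abs_mult power_abs ll_nonneg)
  have s2: "summable (\<lambda>k. norm (cb k * x^k))"
    using sums_summable[OF BS[OF ax]] by (simp add: abs_mult power_abs cb_nonneg)
  from Cauchy_product_sums[OF s1 s2]
  have "(\<lambda>k. \<Sum>i\<le>k. ll i * x^i * (cb (k - i) * x^(k - i))) sums
        ((\<Sum>k. ll k * x^k) * (\<Sum>k. cb k * x^k))" .
  moreover have "(\<lambda>k. \<Sum>i\<le>k. ll i * x^i * (cb (k - i) * x^(k - i))) = (\<lambda>k. cb k * odd_harmonic k * x^k)"
  proof
    fix k
    have "(\<Sum>i\<le>k. ll i * x^i * (cb (k - i) * x^(k - i))) = (\<Sum>i=0..k. ll i * cb (k - i) * x^k)"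
      by (rule sum.cong) (auto simp: power_add[symmetric])
    also have "\<dots> = cb k * odd_harmonic k * x^k" by (simp add: sum_distrib_right[symmetric] coeff_eq)
    finally show "(\<Sum>i\<le>k. ll i * x^i * (cb (k - i) * x^(k - i))) = cb k * odd_harmonic k * x^k" .
  qed
  moreover have "(\<Sum>k. ll k * x^k) * (\<Sum>k. cb k * x^k) = - ln (1 - 4*x) / (2 * sqrt (1 - 4*x))"
    using sums_unique[OF LS[OF assms], symmetric] sums_unique[OF BS[OF assms], symmetric] by simp
  ultimately show ?thesis by simp
qed

theorem theorem24:
  fixes x :: real
  assumes "\<bar>x\<bar> < 1/4"
  shows "(\<lambda>n. real ((4*n) choose (2*n)) * odd_harmonic (2*n) * x ^ (2*n)) sums
           (- (sqrt (1 + 4*x) * ln (1 - 4*x) + sqrt (1 - 4*x) * ln (1 + 4*x))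
              / (4 * sqrt (1 - 16 * x^2))) \<and>
         (\<lambda>n. real ((4*n+2) choose (2*n+1)) * odd_harmonic (2*n+1) * x ^ (2*n+1)) sums
           (- (sqrt (1 + 4*x) * ln (1 - 4*x) - sqrt (1 - 4*x) * ln (1 + 4*x))
              / (4 * sqrt (1 - 16 * x^2)))"
proof -
  define a where "a n = cb n * odd_harmonic n" for n
  define F where "F y = - ln (1 - 4*y) / (2 * sqrt (1 - 4*y))" for y :: real
  have S1: "(\<lambda>n. a n * x^n) sums F x" using AS[OF assms] by (simp add: a_def F_def)
  have S2: "(\<lambda>n. a n * (-x)^n) sums F (-x)" using AS[of "-x"] assms by (simp add: a_def F_def)
  have p: "0 < 1 - 4*x" "0 < 1 + 4*x" using assms by auto
  have sq: "sqrt (1 - 16 * x^2) = sqrt (1 - 4*x) * sqrt (1 + 4*x)"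
    by (simp add: real_sqrt_mult[symmetric] algebra_simps power2_eq_square)
  have sp: "sqrt (1 - 4*x) > 0" "sqrt (1 + 4*x) > 0" using p by auto
  have E: "(\<lambda>n. (a n * x^n + a n * (-x)^n) / 2) sums ((F x + F (-x)) / 2)"
    using sums_divide[OF sums_add[OF S1 S2], of 2] .
  have O: "(\<lambda>n. (a n * x^n - a n * (-x)^n) / 2) sums ((F x - F (-x)) / 2)"
    using sums_divide[OF sums_diff[OF S1 S2], of 2] .
  have E': "(\<lambda>n. (a (2*n) * x^(2*n) + a (2*n) * (-x)^(2*n)) / 2) sums ((F x + F (-x)) / 2)"
  proof (subst sums_mono_reindex[where g = "\<lambda>n. 2*n" and f = "\<lambda>n. (a n * x^n + a n * (-x)^n) / 2"])
    show "strict_mono (\<lambda>n::nat. 2*n)" by (simp add: strict_mono_def)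
    fix n :: nat assume "n \<notin> range (\<lambda>n. 2*n)"
    hence "odd n" by (auto elim!: evenE)
    thus "(a n * x^n + a n * (-x)^n) / 2 = 0" by (simp add: power_minus_odd)
  next
    show "(\<lambda>n. (a n * x^n + a n * (-x)^n) / 2) sums ((F x + F (-x)) / 2)" by (rule E)
  qed
  have O': "(\<lambda>n. (a (2*n+1) * x^(2*n+1) - a (2*n+1) * (-x)^(2*n+1)) / 2) sums ((F x - F (-x)) / 2)"
  proof (subst sums_mono_reindex[where g = "\<lambda>n. 2*n+1" and f = "\<lambda>n. (a n * x^n - a n * (-x)^n) / 2"])
    show "strict_mono (\<lambda>n::nat. 2*n+1)" by (simp add: strict_mono_def)
    fix n :: nat assume "n \<notin> range (\<lambda>n. 2*n+1)"
    hence "even n"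
    proof (rule contrapos_np)
      assume "odd n"
      then obtain k where "n = 2*k+1" by (rule oddE)
      thus "n \<in> range (\<lambda>n. 2*n+1)" by blast
    qed
    thus "(a n * x^n - a n * (-x)^n) / 2 = 0" by (simp add: power_minus_even)
  next
    show "(\<lambda>n. (a n * x^n - a n * (-x)^n) / 2) sums ((F x - F (-x)) / 2)" by (rule O)
  qed
  have gen: "(- l1 / (2 * s1) + - l2 / (2 * s2)) / 2 = - (s2 * l1 + s1 * l2) / (4 * (s1 * s2))"
     "(- l1 / (2 * s1) - - l2 / (2 * s2)) / 2 = - (s2 * l1 - s1 * l2) / (4 * (s1 * s2))"
    if "s1 > 0" "s2 > 0" for s1 s2 l1 l2 :: real
    using that by (simp_all add: field_simps)
  have Fx: "F x = - ln (1 - 4*x) / (2 * sqrt (1 - 4*x))" by (simp add: F_def)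
  have Fmx: "F (-x) = - ln (1 + 4*x) / (2 * sqrt (1 + 4*x))" by (simp add: F_def)
  have cE: "(F x + F (-x)) / 2 = - (sqrt (1 + 4*x) * ln (1 - 4*x) + sqrt (1 - 4*x) * ln (1 + 4*x))
              / (4 * sqrt (1 - 16 * x^2))"
    unfolding Fx Fmx sq by (rule gen(1)[OF sp])
  have cO: "(F x - F (-x)) / 2 = - (sqrt (1 + 4*x) * ln (1 - 4*x) - sqrt (1 - 4*x) * ln (1 + 4*x))
              / (4 * sqrt (1 - 16 * x^2))"
    unfolding Fx Fmx sq by (rule gen(2)[OF sp])
  have tE: "(a (2*n) * x^(2*n) + a (2*n) * (-x)^(2*n)) / 2 = real ((4*n) choose (2*n)) * odd_harmonic (2*n) * x ^ (2*n)" for n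
  proof -
    have "(-x)^(2*n) = x^(2*n)" by (rule power_minus_even) simp
    moreover have "a (2*n) = real ((4*n) choose (2*n)) * odd_harmonic (2*n)"
      unfolding a_def cb_def by (simp add: mult.assoc[symmetric])
    ultimately show ?thesis by simp
  qed
  have tO: "(a (2*n+1) * x^(2*n+1) - a (2*n+1) * (-x)^(2*n+1)) / 2 = real ((4*n+2) choose (2*n+1)) * odd_harmonic (2*n+1) * x ^ (2*n+1)" for n
  proof -
    have "(-x)^(2*n+1) = - (x^(2*n+1))" by (rule power_minus_odd) simp
    moreover have "2 * (2*n+1) = 4*n+2" by simp
    hence "a (2*n+1) = real ((4*n+2) choose (2*n+1)) * odd_harmonic (2*n+1)"
      unfolding a_def cb_def by metis
    ultimately show ?thesis by simp
  qed
  show ?thesis using E' O' unfolding tE tO cE cO by simp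
qed

end
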